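(* Let $\tilde A\in\mathbb{R}^{m\times s}$ have full column rank, $W=\tilde A^\top\tilde A$, $\tilde\lambda>0$, and $r\in\mathbb{R}^s$. Let $u^*=W^{-1}r$, $v^*=(W+\tilde\lambda I)^{-1}r$ and $z^*=\frac1{\tilde\lambda}(u^*-v^* )$ (so that $z^*=(W^2+\tilde\lambda W)^{-1}r$). Suppose $\hat u,\hat v\in\mathbb{R}^s$ satisfy $\|\hat u-u^*\|_W\le\epsilon_{2,1}\|u^*\|_W$ and $\|\hat v-v^*\|_{W+\tilde\lambda I}\le\epsilon_{2,2}\|v^*\|_{W+\tilde\lambda I}$, and let $\hat z=\frac1{\tilde\lambda}(\hat u-\hat v)$. Then $$\|\hat z-z^*\|_{W^2+\tilde\lambda W}\le\frac{1}{\tilde\lambda}\Big(\epsilon_{2,1}\|\tilde A\tilde A^\top+\tilde\lambda I\|+\epsilon_{2,2}\|\tilde A\tilde A^\top\|\Big)\|z^*\|_{W^2+\tilde\lambda W}.$$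
   Context: For positive (semi)definite $B$, $\|x\|_B=\sqrt{x^\top Bx}$; $\|\cdot\|$ on matrices is the spectral norm. *)

theory Defs
  imports "HOL-Analysis.Analysis"
begin

definition wnorm :: "real^'n^'n \<Rightarrow> real^'n \<Rightarrow> real" where
  "wnorm B x = sqrt (x \<bullet> (B *v x))"

definition spec_norm :: "real^'n^'m \<Rightarrow> real" where
  "spec_norm A = onorm (\<lambda>x. A *v x)"

end

theory Submission
  imports Defs
begin

lemma mv_norm: "norm (A *v x) \<le> spec_norm A * norm (x::real^'n)"
  for A :: "real^'n^'m"
  unfolding spec_norm_def by (rule onorm) simp

lemma spec_nonneg: "0 \<le> spec_norm (A::real^'n^'m)"
  unfolding spec_norm_def by (rule onorm_pos_le) simp

lemma adj: "(A *v x) \<bullet> y = x \<bullet> (transpose A *v y)"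
  for A :: "real^'n^'m"
  by (metis dot_lmul_matrix inner_commute transpose_matrix_vector)

lemma sq_le:
  fixes a b c :: real
  assumes "0 \<le> a" "0 \<le> b" "0 \<le> c" "a^2 \<le> c * b^2"
  shows "a \<le> sqrt c * b"
proof -
  have "a = sqrt (a^2)" using assms by simp
  also have "\<dots> \<le> sqrt (c * b^2)" using assms(4) by (rule real_sqrt_le_mono)
  also have "\<dots> = sqrt c * b" using assms by (simp add: real_sqrt_mult)
  finally show ?thesis .
qed

lemma cs2:
  fixes a b c d l :: real
  assumes "0 \<le> l"
  shows "a*b + l*(c*d) \<le> sqrt (a^2 + l*c^2) * sqrt (b^2 + l*d^2)"
proof -
  have "(a*b + l*(c*d))^2 \<le> (a^2 + l*c^2) * (b^2 + l*d^2)"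
  proof -
    have "(a^2 + l*c^2) * (b^2 + l*d^2) - (a*b + l*(c*d))^2 = l * (a*d - c*b)^2"
      by (simp add: algebra_simps power2_eq_square)
    moreover have "0 \<le> l * (a*d - c*b)^2" using assms by simp
    ultimately show ?thesis by linarith
  qed
  hence "a*b + l*(c*d) \<le> sqrt ((a^2 + l*c^2) * (b^2 + l*d^2))" by (rule real_le_rsqrt)
  thus ?thesis by (simp add: real_sqrt_mult)
qed

lemma inv_props:
  fixes B :: "real^'n^'n"
  assumes "\<And>x. B *v x = 0 \<Longrightarrow> x = 0"
  shows "B ** matrix_inv B = mat 1" "matrix_inv B ** B = mat 1"
proof -
  have "invertible B" using assms
    by (simp add: invertible_left_inverse matrix_left_invertible_ker)
  hence "\<exists>B'. B ** B' = mat 1 \<and> B' ** B = mat 1" unfolding invertible_def .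
  hence "B ** matrix_inv B = mat 1 \<and> matrix_inv B ** B = mat 1"
    unfolding matrix_inv_def by (rule someI_ex)
  thus "B ** matrix_inv B = mat 1" "matrix_inv B ** B = mat 1" by auto
qed


theorem mainTheorem13:
  fixes A :: "real^'s^'m" and lam eps21 eps22 :: real
    and r uhat vhat :: "real^'s"
  assumes "rank A = CARD('s)"
    and "lam > 0"
  defines "W \<equiv> transpose A ** A"
  defines "ustar \<equiv> matrix_inv W *v r"
    and "vstar \<equiv> matrix_inv (W + lam *\<^sub>R mat 1) *v r"
  defines "zstar \<equiv> (1 / lam) *\<^sub>R (ustar - vstar)"
  assumes "wnorm W (uhat - ustar) \<le> eps21 * wnorm W ustar"
    and "wnorm (W + lam *\<^sub>R mat 1) (vhat - vstar)
           \<le> eps22 * wnorm (W + lam *\<^sub>R mat 1) vstar"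
  defines "zhat \<equiv> (1 / lam) *\<^sub>R (uhat - vhat)"
  shows "wnorm (W ** W + lam *\<^sub>R W) (zhat - zstar)
         \<le> (1 / lam) * (eps21 * spec_norm (A ** transpose A + lam *\<^sub>R mat 1)
                         + eps22 * spec_norm (A ** transpose A))
             * wnorm (W ** W + lam *\<^sub>R W) zstar"
proof -
  note lam = \<open>lam > 0\<close>
  note hu = \<open>wnorm W (uhat - ustar) \<le> eps21 * wnorm W ustar\<close>
  note hv = \<open>wnorm (W + lam *\<^sub>R mat 1) (vhat - vstar)
           \<le> eps22 * wnorm (W + lam *\<^sub>R mat 1) vstar\<close>
  define At where "At = transpose A"
  define M where "M = W + lam *\<^sub>R mat 1"
  define P where "P = A ** At + lam *\<^sub>R mat 1"
  define K where "K = spec_norm P"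
  define N where "N = spec_norm (A ** At)"
  have K0: "0 \<le> K" unfolding K_def by (rule spec_nonneg)
  have N0: "0 \<le> N" unfolding N_def by (rule spec_nonneg)
  have injA: "x = 0" if "A *v x = 0" for x
  proof -
    have "inj ((*v) A)" using assms(1) full_rank_injective by blast
    thus ?thesis using that by (metis injD matrix_vector_mult_0_right)
  qed
  have Wv: "W *v x = At *v (A *v x)" for x
    by (simp only: W_def At_def matrix_vector_mul_assoc)
  have adjA: "(A *v x) \<bullet> y = x \<bullet> (At *v y)" for x y
    unfolding At_def by (rule adj)
  have adjAt: "(At *v y) \<bullet> x = y \<bullet> (A *v x)" for x y
    using adj[of At y x] by (simp add: At_def)
  have Wq: "x \<bullet> (W *v x) = (norm (A *v x))^2" for x
    by (simp add: Wv adjA[symmetric] power2_norm_eq_inner)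
  have Mv: "M *v x = W *v x + lam *\<^sub>R x" for x
    by (simp add: M_def algebra_simps scaleR_matrix_vector_assoc[symmetric])
  have Mq: "x \<bullet> (M *v x) = (norm (A *v x))^2 + lam * (norm x)^2" for x
    by (simp add: Mv inner_add_right Wq power2_norm_eq_inner)
  have Pv: "P *v y = A *v (At *v y) + lam *\<^sub>R y" for y
    by (simp add: P_def algebra_simps scaleR_matrix_vector_assoc[symmetric] matrix_vector_mul_assoc)
  have WMv: "(W ** W + lam *\<^sub>R W) *v x = W *v (W *v x) + lam *\<^sub>R (W *v x)" for x
    by (simp add: algebra_simps scaleR_matrix_vector_assoc[symmetric] matrix_vector_mul_assoc)
  have WMq: "x \<bullet> ((W ** W + lam *\<^sub>R W) *v x) = (norm (W *v x))^2 + lam * (norm (A *v x))^2" for x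
  proof -
    have "x \<bullet> (W *v (W *v x)) = (norm (W *v x))^2"
      by (simp add: Wv adjA[symmetric] adjAt[symmetric] power2_norm_eq_inner)
    thus ?thesis by (simp add: WMv inner_add_right Wq)
  qed
  define phi where "phi x = (W *v x, sqrt lam *\<^sub>R (A *v x))" for x
  have nphi2: "(norm (phi x))^2 = (norm (At *v (A *v x)))^2 + lam * (norm (A *v x))^2" for x
    using lam by (simp add: phi_def norm_Pair Wv power_mult_distrib)
  have nphi: "wnorm (W ** W + lam *\<^sub>R W) x = norm (phi x)" for x
    using lam by (simp add: wnorm_def WMq phi_def norm_Pair power_mult_distrib)
  have phi_diff: "phi (a - b) = phi a - phi b" for a b
    by (simp add: phi_def algebra_simps)
  have phi_scale: "phi (c *\<^sub>R a) = c *\<^sub>R phi a" for c a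
    by (simp add: phi_def algebra_simps)
  have wW: "wnorm W x = norm (A *v x)" for x
    by (simp add: wnorm_def Wq)
  have wM2: "(wnorm M x)^2 = (norm (A *v x))^2 + lam * (norm x)^2" for x
    using lam by (simp add: wnorm_def Mq)
  have wM0: "0 \<le> wnorm M x" for x
    using lam by (simp add: wnorm_def Mq)
  have L1: "(norm (At *v y))^2 \<le> N * (norm y)^2" for y
  proof -
    have "(norm (At *v y))^2 = y \<bullet> ((A ** At) *v y)"
      by (simp add: power2_norm_eq_inner adjAt matrix_vector_mul_assoc[symmetric])
    also have "\<dots> \<le> norm y * norm ((A ** At) *v y)" by (rule norm_cauchy_schwarz)
    also have "\<dots> \<le> norm y * (N * norm y)"
      by (rule mult_left_mono) (simp_all add: N_def mv_norm)
    finally show ?thesis by (simp add: power2_eq_square algebra_simps)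
  qed
  have L2: "(norm (A *v x))^2 \<le> N * (norm x)^2" for x
  proof -
    have "(norm (A *v x))^2 = x \<bullet> (At *v (A *v x))"
      by (simp add: power2_norm_eq_inner adjA)
    also have "\<dots> \<le> norm x * norm (At *v (A *v x))" by (rule norm_cauchy_schwarz)
    also have "\<dots> \<le> norm x * (sqrt N * norm (A *v x))"
      by (rule mult_left_mono) (simp_all add: sq_le L1 N0)
    finally have "(norm (A *v x))^2 \<le> sqrt N * norm x * norm (A *v x)" by (simp add: algebra_simps)
    hence "norm (A *v x) \<le> sqrt N * norm x"
      by (cases "norm (A *v x) = 0") (auto simp: power2_eq_square N0)
    hence "(norm (A *v x))^2 \<le> (sqrt N * norm x)^2"
      by (intro power_mono) auto
    thus ?thesis using N0 by (simp add: power_mult_distrib)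
  qed
  have K1: "(norm (At *v y))^2 + lam * (norm y)^2 \<le> K * (norm y)^2" for y
  proof -
    have "(norm (At *v y))^2 + lam * (norm y)^2 = y \<bullet> (P *v y)"
      by (simp add: Pv inner_add_right power2_norm_eq_inner adjAt)
    also have "\<dots> \<le> norm y * norm (P *v y)" by (rule norm_cauchy_schwarz)
    also have "\<dots> \<le> norm y * (K * norm y)"
      by (rule mult_left_mono) (simp_all add: K_def mv_norm)
    finally show ?thesis by (simp add: power2_eq_square algebra_simps)
  qed
  have K2: "(norm (P *v y))^2 \<le> K * ((norm (At *v y))^2 + lam * (norm y)^2)" for y
  proof -
    define py where "py = P *v y"
    define S where "S = sqrt ((norm (At *v y))^2 + lam * (norm y)^2)"
    have S0: "0 \<le> S" unfolding S_def using lam by simp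
    have "(norm py)^2 = py \<bullet> (A *v (At *v y)) + lam * (py \<bullet> y)"
    proof -
      have "(norm py)^2 = py \<bullet> py" by (simp add: power2_norm_eq_inner)
      also have "\<dots> = py \<bullet> (A *v (At *v y) + lam *\<^sub>R y)" by (simp add: py_def Pv)
      finally show ?thesis by (simp add: inner_add_right)
    qed
    also have "\<dots> = (At *v py) \<bullet> (At *v y) + lam * (py \<bullet> y)"
      by (simp add: adjAt)
    also have "\<dots> \<le> norm (At *v py) * norm (At *v y) + lam * (norm py * norm y)"
      using lam by (intro add_mono mult_left_mono norm_cauchy_schwarz) auto
    also have "\<dots> \<le> sqrt ((norm (At *v py))^2 + lam * (norm py)^2) * S"
      unfolding S_def using lam by (intro cs2) auto
    also have "\<dots> \<le> (sqrt K * norm py) * S"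
      by (intro mult_right_mono S0 sq_le) (use K1 K0 lam in auto)
    finally have "(norm py)^2 \<le> sqrt K * norm py * S" .
    hence "norm py \<le> sqrt K * S"
      by (cases "norm py = 0") (auto simp: power2_eq_square S0 K0)
    hence "(norm py)^2 \<le> (sqrt K * S)^2" by (intro power_mono) auto
    also have "\<dots> = K * ((norm (At *v y))^2 + lam * (norm y)^2)"
      unfolding S_def using K0 lam by (simp add: power_mult_distrib)
    finally show ?thesis unfolding py_def .
  qed
  have Winj: "x = 0" if "W *v x = 0" for x
  proof -
    have "(norm (A *v x))^2 = 0" using Wq[of x] that by simp
    thus ?thesis using injA by simp
  qed
  have Minj: "x = 0" if "M *v x = 0" for x
  proof -
    have "(norm (A *v x))^2 + lam * (norm x)^2 = 0" using Mq[of x] that by simp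
    moreover have "0 \<le> (norm (A *v x))^2" by simp
    ultimately have "lam * (norm x)^2 = 0" using lam
      by (metis add_nonneg_eq_0_iff zero_le_power2 mult_nonneg_nonneg less_imp_le)
    thus ?thesis using lam by simp
  qed
  have Wu: "W *v ustar = r"
    using inv_props(1)[of W, OF Winj] by (simp add: ustar_def matrix_vector_mul_assoc)
  have Mvs: "M *v vstar = r"
    using inv_props(1)[of M, OF Minj] by (simp add: vstar_def M_def[symmetric] matrix_vector_mul_assoc)
  have Mz: "M *v zstar = ustar"
  proof -
    have Mu: "M *v ustar = r + lam *\<^sub>R ustar" by (simp add: Mv Wu)
    have "M *v zstar = (1/lam) *\<^sub>R (M *v ustar - M *v vstar)"
      by (simp add: zstar_def algebra_simps)
    also have "\<dots> = (1/lam) *\<^sub>R (lam *\<^sub>R ustar)" by (simp only: Mu Mvs) simp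
    finally show ?thesis using lam by simp
  qed
  have vz: "vstar = W *v zstar"
  proof -
    have "lam *\<^sub>R zstar = ustar - vstar" using lam by (simp add: zstar_def)
    hence "vstar = M *v zstar - lam *\<^sub>R zstar" by (simp add: Mz)
    thus ?thesis by (simp add: Mv)
  qed
  define eu where "eu = uhat - ustar"
  define ev where "ev = vhat - vstar"
  have Eu: "norm (phi eu) \<le> sqrt K * wnorm W eu"
    unfolding wW
  proof (rule sq_le)
    show "(norm (phi eu))^2 \<le> K * (norm (A *v eu))^2"
      using K1[of "A *v eu"] by (simp add: nphi2)
  qed (use K0 in auto)
  have Uz: "wnorm W ustar \<le> sqrt K * norm (phi zstar)"
    unfolding wW
  proof (rule sq_le)
    have "A *v ustar = P *v (A *v zstar)"
      by (simp add: Mz[symmetric] Mv Pv Wv algebra_simps)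
    thus "(norm (A *v ustar))^2 \<le> K * (norm (phi zstar))^2"
      using K2[of "A *v zstar"] by (simp add: nphi2)
  qed (use K0 in auto)
  have Ev: "norm (phi ev) \<le> sqrt N * wnorm M ev"
  proof (rule sq_le)
    have "(norm (phi ev))^2 \<le> N * (norm (A *v ev))^2 + lam * (N * (norm ev)^2)"
      unfolding nphi2 using lam L1[of "A *v ev"] L2[of ev]
      by (intro add_mono mult_left_mono) auto
    thus "(norm (phi ev))^2 \<le> N * (wnorm M ev)^2"
      by (simp add: wM2 algebra_simps)
  qed (use N0 wM0 in auto)
  have Vz: "wnorm M vstar \<le> sqrt N * norm (phi zstar)"
  proof (rule sq_le)
    have "(wnorm M vstar)^2 \<le> N * (norm (At *v (A *v zstar)))^2 + lam * (N * (norm (A *v zstar))^2)"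
      unfolding wM2 using lam L1[of "A *v zstar"] L2[of "W *v zstar"]
      by (intro add_mono mult_left_mono) (auto simp: vz Wv)
    thus "(wnorm M vstar)^2 \<le> N * (norm (phi zstar))^2"
      by (simp add: nphi2 algebra_simps)
  qed (use N0 wM0 in auto)
  have zero_case: "ustar = 0 \<and> vstar = 0 \<and> zstar = 0" if "r = 0"
    using that by (simp add: ustar_def vstar_def zstar_def)
  have B1: "norm (phi eu) \<le> eps21 * K * norm (phi zstar)"
  proof (cases "r = 0")
    case True
    hence "wnorm W eu \<le> 0" using hu zero_case by (simp add: eu_def wW)
    hence "norm (phi eu) \<le> 0" using Eu K0
      by (metis mult_nonneg_nonpos order_trans real_sqrt_ge_zero)
    thus ?thesis using True zero_case by (simp add: phi_def)
  next
    case False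
    have "wnorm W ustar > 0"
    proof -
      have "A *v ustar \<noteq> 0" using False Wu Wv by auto
      thus ?thesis by (simp add: wW)
    qed
    moreover have "0 \<le> wnorm W eu" by (simp add: wW)
    ultimately have e0: "0 \<le> eps21" using hu unfolding eu_def
      by (metis linorder_not_le mult_neg_pos order_le_less_trans)
    have "norm (phi eu) \<le> sqrt K * (eps21 * wnorm W ustar)"
      using Eu hu K0 unfolding eu_def
      by (meson mult_left_mono order_trans real_sqrt_ge_zero)
    also have "\<dots> \<le> sqrt K * (eps21 * (sqrt K * norm (phi zstar)))"
      using Uz e0 K0 by (intro mult_left_mono) auto
    also have "\<dots> = eps21 * K * norm (phi zstar)"
      using K0 by (simp add: algebra_simps)
    finally show ?thesis .
  qed
  have B2: "norm (phi ev) \<le> eps22 * N * norm (phi zstar)"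
  proof (cases "r = 0")
    case True
    hence "wnorm M ev \<le> 0" using hv zero_case by (simp add: ev_def M_def wnorm_def)
    hence "norm (phi ev) \<le> 0" using Ev N0
      by (metis mult_nonneg_nonpos order_trans real_sqrt_ge_zero)
    thus ?thesis using True zero_case by (simp add: phi_def)
  next
    case False
    have "wnorm M vstar > 0"
    proof -
      have "vstar \<noteq> 0" using False Mvs by auto
      hence "(wnorm M vstar)^2 > 0" using lam
        by (simp add: wM2 add_nonneg_pos)
      thus ?thesis using wM0[of vstar] by (simp add: less_le)
    qed
    moreover have "0 \<le> wnorm M ev" by (rule wM0)
    ultimately have e0: "0 \<le> eps22" using hv unfolding ev_def M_def
      by (metis linorder_not_le mult_neg_pos order_le_less_trans)
    have "norm (phi ev) \<le> sqrt N * (eps22 * wnorm M vstar)"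
      using Ev hv N0 unfolding ev_def M_def
      by (meson mult_left_mono order_trans real_sqrt_ge_zero)
    also have "\<dots> \<le> sqrt N * (eps22 * (sqrt N * norm (phi zstar)))"
      using Vz e0 N0 by (intro mult_left_mono) auto
    also have "\<dots> = eps22 * N * norm (phi zstar)"
      using N0 by (simp add: algebra_simps)
    finally show ?thesis .
  qed
  have "zhat - zstar = (1/lam) *\<^sub>R (eu - ev)"
    by (simp add: zhat_def zstar_def eu_def ev_def algebra_simps)
  hence "norm (phi (zhat - zstar)) = (1/lam) * norm (phi eu - phi ev)"
    using lam by (simp add: phi_scale phi_diff)
  also have "\<dots> \<le> (1/lam) * (norm (phi eu) + norm (phi ev))"
    using lam by (intro mult_left_mono norm_triangle_ineq4) auto
  also have "\<dots> \<le> (1/lam) * (eps21 * K * norm (phi zstar) + eps22 * N * norm (phi zstar))"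
    using lam B1 B2 by (intro mult_left_mono add_mono) auto
  finally show ?thesis
    by (simp add: nphi K_def N_def P_def At_def algebra_simps)
qed

end
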